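(* Let $M,N\in\mathbb{S}^{q+r}$. If there exists $\alpha\in\mathbb{R}$ with $M-\alpha N\ge 0$, then $\mathcal{Z}_r^0(N)\subseteq\mathcal{Z}_r(M)$. Next, define $\Theta:=\begin{bmatrix}I\\ -N_{22}^\dagger N_{21}\end{bmatrix}^\top M\begin{bmatrix}I\\ -N_{22}^\dagger N_{21}\end{bmatrix}\in\mathbb{S}^q$ and assume that (a) $M,N\in\boldsymbol{\Pi}_{q,r}$, (b) $N\mid N_{22}=0$, and (c) $\ker\Theta\subseteq\ker(M\mid M_{22})$. Then $\mathcal{Z}_r^0(N)\subseteq\mathcal{Z}_r(M)$ if and only if there exists $\alpha\ge 0$ such that $M-\alpha N\ge 0$.
   Context: $\mathbb{S}^k$ denotes the real symmetric $k\times k$ matrices; for symmetric matrices, $A\ge 0$ means positive semidefinite. $A^\dagger$ is the Moore–Penrose pseudo-inverse. Any $\Pi\in\mathbb{S}^{q+r}$ (in particular $M$, $N$) is partitioned as $\Pi=\begin{bmatrix}\Pi_{11}&\Pi_{12}\\ \Pi_{21}&\Pi_{22}\end{bmatrix}$ with $\Pi_{11}\in\mathbb{S}^q$, $\Pi_{22}\in\mathbb{S}^r$. The generalized Schur complement is $\Pi\mid\Pi_{22}:=\Pi_{11}-\Pi_{12}\Pi_{22}^\dagger\Pi_{21}$. The set $\boldsymbol{\Pi}_{q,r}$ consists of all $\Pi\in\mathbb{S}^{q+r}$ with $\Pi_{22}\le 0$, $\Pi\mid\Pi_{22}\ge 0$ and $\ker\Pi_{22}\subseteq\ker\Pi_{12}$.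 Define $\mathcal{Z}_r(\Pi)=\{Z\in\mathbb{R}^{r\times q}:\begin{bmatrix}I_q\\ Z\end{bmatrix}^\top\Pi\begin{bmatrix}I_q\\ Z\end{bmatrix}\ge 0\}$ and $\mathcal{Z}_r^0(\Pi)$ the same with $=0$. *)

theory Defs
  imports "HOL-Analysis.Analysis"
begin

definition symmetric_mat :: "real^'n^'n \<Rightarrow> bool" where
  "symmetric_mat A \<longleftrightarrow> transpose A = A"

definition psd :: "real^'n^'n \<Rightarrow> bool" where
  "psd A \<longleftrightarrow> symmetric_mat A \<and> (\<forall>x. x \<bullet> (A *v x) \<ge> 0)"

definition mat_ker :: "real^'n^'m \<Rightarrow> (real^'n) set" where
  "mat_ker A = {x. A *v x = 0}"

definition pinv :: "real^'n^'m \<Rightarrow> real^'m^'n" where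
  "pinv A = (THE X. A ** X ** A = A \<and> X ** A ** X = X \<and>
                    transpose (A ** X) = A ** X \<and> transpose (X ** A) = X ** A)"

definition blk11 :: "real^('q::finite+'r::finite)^('q+'r) \<Rightarrow> real^'q^'q" where
  "blk11 P = (\<chi> i j. P $ Inl i $ Inl j)"
definition blk12 :: "real^('q::finite+'r::finite)^('q+'r) \<Rightarrow> real^'r^'q" where
  "blk12 P = (\<chi> i j. P $ Inl i $ Inr j)"
definition blk21 :: "real^('q::finite+'r::finite)^('q+'r) \<Rightarrow> real^'q^'r" where
  "blk21 P = (\<chi> i j. P $ Inr i $ Inl j)"
definition blk22 :: "real^('q::finite+'r::finite)^('q+'r) \<Rightarrow> real^'r^'r" where
  "blk22 P = (\<chi> i j. P $ Inr i $ Inr j)"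

definition schur :: "real^('q::finite+'r::finite)^('q+'r) \<Rightarrow> real^'q^'q" where
  "schur P = blk11 P - blk12 P ** pinv (blk22 P) ** blk21 P"

definition PiSet :: "(real^('q::finite+'r::finite)^('q+'r)) set" where
  "PiSet = {P. symmetric_mat P \<and> psd (- blk22 P) \<and> psd (schur P) \<and>
               mat_ker (blk22 P) \<subseteq> mat_ker (blk12 P)}"

definition stackI :: "real^'q^'r \<Rightarrow> real^'q^('q::finite+'r::finite)" where
  "stackI Z = (\<chi> i j. case i of Inl a \<Rightarrow> (mat 1 :: real^'q^'q) $ a $ j | Inr b \<Rightarrow> Z $ b $ j)"

definition Zset :: "real^('q::finite+'r::finite)^('q+'r) \<Rightarrow> (real^'q^'r) set" where
  "Zset P = {Z. psd (transpose (stackI Z) ** P ** stackI Z)}"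

definition Zset0 :: "real^('q::finite+'r::finite)^('q+'r) \<Rightarrow> (real^'q^'r) set" where
  "Zset0 P = {Z. transpose (stackI Z) ** P ** stackI Z = 0}"

end

theory Submission
  imports Defs
begin


lemma dot_transpose: "(transpose A *v x) \<bullet> (y::real^_) = x \<bullet> (A *v y)"
  by (simp add: dot_lmul_matrix)

lemma dot_sym: "transpose A = A \<Longrightarrow> (A *v x) \<bullet> (y::real^_) = x \<bullet> (A *v y)"
  by (metis dot_transpose)

lemma exists_proj:
  fixes A :: "real^'n^'n"
  obtains P :: "real^'n^'n" where "transpose P = P" "\<And>x. P *v x \<in> range ((*v) A)"
     "\<And>x. P *v (A *v x) = A *v x"
proof -
  have S: "subspace (range ((*v) A))" by (simp add: linear_subspace_image)
  obtain B where B: "B \<subseteq> range ((*v) A)" "pairwise orthogonal B"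
              and B1: "\<And>x. x \<in> B \<Longrightarrow> norm x = 1"
              and "independent B" "card B = dim (range ((*v) A))" "span B = range ((*v) A)"
    by (rule orthonormal_basis_subspace[OF S]) auto
  have fin: "finite B" using \<open>independent B\<close> independent_imp_finite by blast
  define P :: "real^'n^'n" where "P = (\<chi> i j. \<Sum>b\<in>B. b$i * b$j)"
  have Pv: "P *v x = (\<Sum>b\<in>B. (b \<bullet> x) *\<^sub>R b)" for x
  proof -
    have "(P *v x)$i = (\<Sum>b\<in>B. (b \<bullet> x) * b$i)" for i
    proof -
      have "(P *v x)$i = (\<Sum>j\<in>UNIV. \<Sum>b\<in>B. b$i * b$j * x$j)"
        unfolding P_def matrix_vector_mult_def by (simp add: sum_distrib_right)
      also have "\<dots> = (\<Sum>b\<in>B. \<Sum>j\<in>UNIV. b$i * b$j * x$j)" by (rule sum.swap)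
      also have "\<dots> = (\<Sum>b\<in>B. (b \<bullet> x) * b$i)"
        by (simp add: inner_vec_def sum_distrib_left sum_distrib_right mult_ac)
      finally show ?thesis .
    qed
    then show ?thesis by (simp add: vec_eq_iff sum_component)
  qed
  have PT: "transpose P = P"
    unfolding P_def transpose_def by (simp add: vec_eq_iff mult.commute)
  have inspan: "P *v x \<in> span B" for x
    unfolding Pv by (intro span_sum) (simp add: span_base span_scale)
  have fixP: "P *v y = y" if y: "y \<in> span B" for y
  proof -
    define d where "d = y - P *v y"
    have dspan: "d \<in> span B" unfolding d_def using y inspan by (simp add: span_diff)
    have orth: "orthogonal d b'" if b': "b' \<in> B" for b'
    proof -
      have "b' \<bullet> (P *v y) = (\<Sum>b\<in>B. (b \<bullet> y) * (b' \<bullet> b))"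
        unfolding Pv by (simp add: inner_sum_right)
      also have "\<dots> = (\<Sum>b\<in>B. if b = b' then b \<bullet> y else 0)"
      proof (rule sum.cong)
        fix b assume "b \<in> B"
        show "(b \<bullet> y) * (b' \<bullet> b) = (if b = b' then b \<bullet> y else 0)"
        proof (cases "b = b'")
          case True
          then show ?thesis using B1[OF b'] by (simp add: dot_square_norm)
        next
          case False
          then show ?thesis using B(2) \<open>b \<in> B\<close> b' by (auto simp: pairwise_def orthogonal_def inner_commute)
        qed
      qed simp
      also have "\<dots> = b' \<bullet> y" using b' fin by (simp add: inner_commute)
      finally show ?thesis unfolding d_def orthogonal_def by (simp add: inner_diff_right inner_commute)
    qed
    have "orthogonal d d" by (rule orthogonal_to_span[OF dspan]) (use orth in \<open>simp add: orthogonal_commute\<close>)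
    then have "d = 0" by (simp add: orthogonal_def)
    then show ?thesis unfolding d_def by simp
  qed
  show ?thesis
  proof (rule that[OF PT])
    show "P *v x \<in> range ((*v) A)" for x using inspan \<open>span B = _\<close> by simp
    show "P *v (A *v x) = A *v x" for x using fixP \<open>span B = _\<close> by simp
  qed
qed




definition penrose :: "real^'n^'m \<Rightarrow> real^'m^'n \<Rightarrow> bool" where
  "penrose A X \<longleftrightarrow> A ** X ** A = A \<and> X ** A ** X = X \<and>
                    transpose (A ** X) = A ** X \<and> transpose (X ** A) = X ** A"

lemma penrose_unique:
  assumes "penrose A X" "penrose A Y" shows "X = Y"
proof -
  have a1: "A ** X ** A = A" "X ** A ** X = X" "transpose (A ** X) = A ** X" "transpose (X ** A) = X ** A"
    using assms(1) unfolding penrose_def by auto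
  have b1: "A ** Y ** A = A" "Y ** A ** Y = Y" "transpose (A ** Y) = A ** Y" "transpose (Y ** A) = Y ** A"
    using assms(2) unfolding penrose_def by auto
  have tA: "transpose A = transpose A ** transpose Y ** transpose A"
    by (metis b1(1) matrix_transpose_mul matrix_mul_assoc)
  have "X = X ** (A ** X)" by (metis a1(2) matrix_mul_assoc)
  also have "\<dots> = X ** (transpose X ** transpose A)" by (metis a1(3) matrix_transpose_mul)
  also have "\<dots> = X ** (transpose X ** (transpose A ** transpose Y ** transpose A))" using tA by simp
  also have "\<dots> = X ** (transpose (A ** X) ** transpose (A ** Y))"
    by (simp add: matrix_transpose_mul matrix_mul_assoc)
  also have "\<dots> = X ** (A ** X ** A ** Y)" using a1(3) b1(3) by (simp add: matrix_mul_assoc)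
  also have "\<dots> = X ** A ** Y" using a1(1) by (simp add: matrix_mul_assoc)
  finally have X: "X = X ** A ** Y" .
  have "Y = (Y ** A) ** Y" by (metis b1(2))
  also have "\<dots> = (transpose A ** transpose Y) ** Y" by (metis b1(4) matrix_transpose_mul)
  also have "\<dots> = ((transpose A ** transpose X ** transpose A) ** transpose Y) ** Y"
    by (metis a1(1) matrix_transpose_mul matrix_mul_assoc)
  also have "\<dots> = (transpose (X ** A) ** transpose (Y ** A)) ** Y"
    by (simp add: matrix_transpose_mul matrix_mul_assoc)
  also have "\<dots> = X ** (A ** Y ** A) ** Y" using a1(4) b1(4) by (simp add: matrix_mul_assoc)
  also have "\<dots> = X ** A ** Y" using b1(1,2) by (simp add: matrix_mul_assoc)
  finally show ?thesis using X by simp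
qed

lemma penrose_exists_sym:
  fixes A :: "real^'n^'n"
  assumes sym: "transpose A = A"
  shows "\<exists>X. penrose A X"
proof -
  obtain P :: "real^'n^'n" where PT: "transpose P = P" and Pr: "\<And>x. P *v x \<in> range ((*v) A)"
     and PA: "\<And>x. P *v (A *v x) = A *v x"
    using exists_proj by blast
  have PP: "P *v (P *v x) = P *v x" for x using Pr[of x] PA by auto
  have AP: "A *v (P *v x) = A *v x" for x
  proof -
    have "w \<bullet> (A *v (P *v x)) = w \<bullet> (A *v x)" for w
      by (metis PA PT dot_sym sym)
    then have "w \<bullet> (A *v (P *v x) - A *v x) = 0" for w
      by (simp add: inner_diff_right)
    then have "(A *v (P *v x) - A *v x) \<bullet> (A *v (P *v x) - A *v x) = 0" by blast
    then show ?thesis by simp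
  qed
  define B where "B = A + mat 1 - P"
  have Bv: "B *v x = A *v x + x - P *v x" for x
    unfolding B_def by (simp add: algebra_simps)
  have BP: "B *v (P *v x) = A *v x" for x unfolding Bv using AP PP by simp
  have PB: "P *v (B *v x) = A *v x" for x unfolding Bv using PA PP
    by (simp add: matrix_vector_right_distrib matrix_vector_mult_diff_distrib)
  have ker: "B *v x = 0 \<Longrightarrow> x = 0" for x
  proof -
    assume B0: "B *v x = 0"
    have Ax: "A *v x = 0" using PB[of x] B0 by simp
    then have xP: "x = P *v x" using B0 unfolding Bv by (simp add: algebra_simps)
    obtain y where y: "P *v x = A *v y" using Pr[of x] by auto
    have "x \<bullet> x = (A *v y) \<bullet> x" using xP y by simp
    also have "\<dots> = y \<bullet> (A *v x)" using dot_sym[OF sym] by simp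
    finally show "x = 0" using Ax by simp
  qed
  obtain G where GB: "G ** B = mat 1" using ker matrix_left_invertible_ker by blast
  then have BG: "B ** G = mat 1" using matrix_left_right_inverse by blast
  have GBv: "G *v (B *v x) = x" for x by (metis GB matrix_vector_mul_assoc matrix_vector_mul_lid)
  have BGv: "B *v (G *v x) = x" for x by (metis BG matrix_vector_mul_assoc matrix_vector_mul_lid)
  define X where "X = G ** P"
  have Xv: "X *v x = G *v (P *v x)" for x unfolding X_def by (simp add: matrix_vector_mul_assoc)
  have PG: "P *v (G *v w) = G *v (P *v w)" for w
    by (metis BGv BP GBv PB)
  have AX: "A ** X = P"
    unfolding matrix_eq
  proof
    fix x
    have "A *v (G *v (P *v x)) = P *v (B *v (G *v (P *v x)))" using PB by simp
    then show "(A ** X) *v x = P *v x" by (simp add: Xv BGv PP flip: matrix_vector_mul_assoc)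
  qed
  have XA: "X ** A = P"
    unfolding matrix_eq
  proof
    fix x
    show "(X ** A) *v x = P *v x" by (metis BP GBv PA Xv matrix_vector_mul_assoc)
  qed
  have "penrose A X"
    unfolding penrose_def
  proof (intro conjI)
    show "A ** X ** A = A" unfolding AX matrix_eq by (simp add: flip: matrix_vector_mul_assoc add: PA)
    show "X ** A ** X = X" unfolding XA matrix_eq
      by (simp add: flip: matrix_vector_mul_assoc add: Xv PG PP)
    show "transpose (A ** X) = A ** X" using AX PT by simp
    show "transpose (X ** A) = X ** A" using XA PT by simp
  qed
  then show ?thesis by blast
qed

lemma pinv_penrose_sym:
  fixes A :: "real^'n^'n"
  assumes sym: "transpose A = A"
  shows "penrose A (pinv A)"
proof -
  obtain X where X: "penrose A X" using penrose_exists_sym[OF sym] by blast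
  have "pinv A = X" unfolding pinv_def
    by (rule the_equality) (use X penrose_unique in \<open>auto simp: penrose_def\<close>)
  then show ?thesis using X by simp
qed

lemma pinv_sym:
  fixes A :: "real^'n^'n"
  assumes sym: "transpose A = A"
  shows "transpose (pinv A) = pinv A"
proof -
  have p: "penrose A (pinv A)" by (rule pinv_penrose_sym[OF sym])
  let ?X = "pinv A"
  have "penrose A (transpose ?X)"
    using p unfolding penrose_def
    by (metis matrix_transpose_mul matrix_mul_assoc sym transpose_transpose)
  then show ?thesis using penrose_unique p by blast
qed




lemma quad_a_nonneg:
  fixes a b c :: real
  assumes "\<And>t. a * t^2 + b * t + c \<ge> 0"
  shows "a \<ge> 0"
proof (rule ccontr)
  assume "\<not> a \<ge> 0" then have a: "a < 0" by simp
  define T where "T = (\<bar>b\<bar> + \<bar>c\<bar> + 1) / (- a)"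
  define t where "t = max 1 T"
  have t1: "t \<ge> 1" and tT: "t \<ge> T" unfolding t_def by auto
  have "(-a) * T = (\<bar>b\<bar> + \<bar>c\<bar> + 1)" unfolding T_def using a by simp
  moreover have "(-a) * T \<le> (-a) * t" using tT a by (intro mult_left_mono) auto
  ultimately have at: "a * t + \<bar>b\<bar> + \<bar>c\<bar> \<le> -1" by linarith
  have "b * t \<le> \<bar>b\<bar> * t" using t1 by (intro mult_right_mono) auto
  moreover have "c \<le> \<bar>c\<bar> * t"
  proof -
    have "\<bar>c\<bar> * 1 \<le> \<bar>c\<bar> * t" using t1 by (intro mult_left_mono) auto
    then show ?thesis by linarith
  qed
  ultimately have "a * t^2 + b * t + c \<le> t * (a * t + \<bar>b\<bar> + \<bar>c\<bar>)"
    by (simp add: power2_eq_square algebra_simps)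
  also have "\<dots> \<le> t * (-1)" using at t1 by (intro mult_left_mono) auto
  also have "\<dots> < 0" using t1 by simp
  finally show False using assms[of t] by simp
qed

lemma lin_b_zero:
  fixes b c :: real
  assumes "\<And>t. b * t + c \<ge> 0"
  shows "b = 0"
proof (rule ccontr)
  assume b: "b \<noteq> 0"
  have "b * (- (\<bar>c\<bar> + 1) / b) = - (\<bar>c\<bar> + 1)" using b by simp
  then have "b * (- (\<bar>c\<bar> + 1) / b) + c < 0" by linarith
  then show False using assms[of "- (\<bar>c\<bar> + 1) / b"] by simp
qed

lemma quad_discr:
  fixes a b c :: real
  assumes h: "\<And>t. a * t^2 + 2 * b * t + c \<ge> 0"
  shows "b^2 \<le> a * c"
proof -
  have a0: "a \<ge> 0" using quad_a_nonneg[of a "2*b" c] h by simp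
  show ?thesis
  proof (cases "a = 0")
    case True
    then have "(2*b) * t + c \<ge> 0" for t using h[of t] by simp
    then have "2 * b = 0" by (rule lin_b_zero)
    then show ?thesis using True by simp
  next
    case False
    then have ap: "a > 0" using a0 by simp
    have "a * (-b/a)^2 + 2 * b * (-b/a) + c = c - b^2 / a"
      using ap by (simp add: power2_eq_square field_simps)
    then have "c - b^2/a \<ge> 0" using h[of "-b/a"] by simp
    then show ?thesis using ap by (simp add: field_simps)
  qed
qed

lemma sum_UNIV_plus:
  "(\<Sum>j\<in>(UNIV::('q::finite+'r::finite) set). f j) = (\<Sum>a\<in>UNIV. f (Inl a)) + (\<Sum>b\<in>UNIV. f (Inr b))"
proof -
  have "(\<Sum>j\<in>(UNIV::('q+'r) set). f j) = (\<Sum>j\<in>(UNIV::'q set) <+> (UNIV::'r set). f j)"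
    by (simp add: UNIV_Plus_UNIV)
  also have "\<dots> = (\<Sum>a\<in>UNIV. f (Inl a)) + (\<Sum>b\<in>UNIV. f (Inr b))"
    by (subst sum.Plus) auto
  finally show ?thesis .
qed

definition top :: "real^('q::finite+'r::finite) \<Rightarrow> real^'q" where
  "top v = (\<chi> a. v $ Inl a)"
definition bot :: "real^('q::finite+'r::finite) \<Rightarrow> real^'r" where
  "bot v = (\<chi> b. v $ Inr b)"
definition join :: "real^'q \<Rightarrow> real^'r \<Rightarrow> real^('q::finite+'r::finite)" where
  "join x y = (\<chi> i. case i of Inl a \<Rightarrow> x $ a | Inr b \<Rightarrow> y $ b)"

lemma top_join[simp]: "top (join x y) = x" and bot_join[simp]: "bot (join x y) = y"
  by (simp_all add: top_def bot_def join_def vec_eq_iff)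

lemma join_eq_iff: "v = join (top v) (bot v)"
  by (simp add: top_def bot_def join_def vec_eq_iff split: sum.split)

lemma join_add: "join (x + x') (y + y') = join x y + join x' y'"
  by (simp add: join_def vec_eq_iff split: sum.split)

lemma join_scale: "join (c *\<^sub>R x) (c *\<^sub>R y) = c *\<^sub>R join x y"
  by (simp add: join_def vec_eq_iff split: sum.split)

lemma join_zero[simp]: "join 0 0 = 0"
  by (simp add: join_def vec_eq_iff split: sum.split)

lemma inner_split: "(v::real^('q::finite+'r::finite)) \<bullet> w = top v \<bullet> top w + bot v \<bullet> bot w"
  by (simp add: inner_vec_def top_def bot_def sum_UNIV_plus)

lemma inner_join: "join x y \<bullet> join x' y' = x \<bullet> x' + y \<bullet> y'"
  using inner_split[of "join x y" "join x' y'"] by simp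

lemma top_mult:
  fixes M :: "real^('q::finite+'r::finite)^('q+'r)"
  shows "top (M *v v) = blk11 M *v top v + blk12 M *v bot v"
  by (simp add: vec_eq_iff top_def bot_def blk11_def blk12_def blk21_def blk22_def matrix_vector_mult_def sum_UNIV_plus)

lemma bot_mult:
  fixes M :: "real^('q::finite+'r::finite)^('q+'r)"
  shows "bot (M *v v) = blk21 M *v top v + blk22 M *v bot v"
  by (simp add: vec_eq_iff top_def bot_def blk11_def blk12_def blk21_def blk22_def matrix_vector_mult_def sum_UNIV_plus)

lemma stackI_mult: "stackI Z *v x = join x (Z *v x)"
proof -
  have "(stackI Z *v x)$i = join x (Z *v x) $ i" for i
  proof (cases i)
    case (Inl a)
    have "(stackI Z *v x)$i = (\<Sum>j\<in>UNIV. (mat 1::real^_^_)$a$j * x$j)"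
      by (simp add: Inl matrix_vector_mult_def stackI_def)
    also have "\<dots> = ((mat 1::real^_^_) *v x)$a" by (simp only: matrix_vector_mult_def vec_lambda_beta)
    also have "\<dots> = x$a" by simp
    finally show ?thesis using Inl by (simp add: join_def)
  next
    case (Inr b)
    then show ?thesis by (simp add: matrix_vector_mult_def stackI_def join_def)
  qed
  then show ?thesis by (simp add: vec_eq_iff)
qed

lemma blk_sym:
  assumes "symmetric_mat M"
  shows "transpose (blk12 M) = blk21 M" "transpose (blk21 M) = blk12 M"
    "transpose (blk22 M) = blk22 M" "transpose (blk11 M) = blk11 M"
proof -
  have m: "M$i$j = M$j$i" for i j
  proof -
    have "M$i$j = (transpose M)$i$j" using assms by (simp add: symmetric_mat_def)
    also have "\<dots> = M$j$i" by (simp add: transpose_def)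
    finally show ?thesis .
  qed
  show "transpose (blk12 M) = blk21 M" "transpose (blk21 M) = blk12 M"
    "transpose (blk22 M) = blk22 M" "transpose (blk11 M) = blk11 M"
    by (auto simp: vec_eq_iff transpose_def blk11_def blk12_def blk21_def blk22_def m)
qed

lemma quad_congr: "(x::real^_) \<bullet> ((transpose S ** M ** S) *v x) = (S *v x) \<bullet> (M *v (S *v x))"
proof -
  have "(transpose S ** M ** S) *v x = transpose S *v (M *v (S *v x))" by (simp add: matrix_vector_mul_assoc matrix_mul_assoc)
  then show ?thesis using dot_transpose[of "transpose S" x "M *v (S *v x)"] by simp
qed

lemma congr_sym: "symmetric_mat M \<Longrightarrow> symmetric_mat (transpose S ** M ** S)"
  unfolding symmetric_mat_def by (simp add: matrix_transpose_mul matrix_mul_assoc)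

lemma psd_zero:
  assumes "psd P" "y \<bullet> (P *v y) = 0"
  shows "P *v y = 0"
proof -
  have sym: "transpose P = P" and nn: "\<And>x. x \<bullet> (P *v x) \<ge> 0"
    using assms(1) unfolding psd_def symmetric_mat_def by auto
  have "z \<bullet> (P *v y) = 0" for z
  proof -
    have "(z \<bullet> (P *v z)) * t^2 + 2 * (z \<bullet> (P *v y)) * t + 0 \<ge> 0" for t
    proof -
      have "(y + t *\<^sub>R z) \<bullet> (P *v (y + t *\<^sub>R z)) =
         (z \<bullet> (P *v z)) * t^2 + 2 * (z \<bullet> (P *v y)) * t"
        using assms(2) dot_sym[OF sym, of y z]
        by (simp add: algebra_simps matrix_vector_right_distrib matrix_vector_mult_scaleR
            inner_add_left inner_add_right power2_eq_square inner_commute)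
      then show ?thesis using nn[of "y + t *\<^sub>R z"] by simp
    qed
    then have "(z \<bullet> (P *v y))^2 \<le> (z \<bullet> (P *v z)) * 0" by (rule quad_discr)
    then show ?thesis by simp
  qed
  from this[of "P *v y"] show ?thesis by simp
qed

lemma psd_bound:
  assumes "psd P"
  obtains K where "K > 0" "\<And>y. (P *v y) \<bullet> (P *v y) \<le> K * (y \<bullet> (P *v y))"
proof -
  have sym: "transpose P = P" and nn: "\<And>x. x \<bullet> (P *v x) \<ge> 0"
    using assms(1) unfolding psd_def symmetric_mat_def by auto
  obtain K where K: "K > 0" "\<And>x. norm (P *v x) \<le> K * norm x"
    using linear_bounded_pos[OF matrix_vector_mul_linear] by blast
  have cs: "(w \<bullet> (P *v y))^2 \<le> (y \<bullet> (P *v y)) * (w \<bullet> (P *v w))" for w y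
  proof -
    have "(y \<bullet> (P *v y)) * t^2 + 2 * (w \<bullet> (P *v y)) * t + (w \<bullet> (P *v w)) \<ge> 0" for t
    proof -
      have "(w + t *\<^sub>R y) \<bullet> (P *v (w + t *\<^sub>R y)) =
         (y \<bullet> (P *v y)) * t^2 + 2 * (w \<bullet> (P *v y)) * t + (w \<bullet> (P *v w))"
        using dot_sym[OF sym, of w y]
        by (simp add: algebra_simps matrix_vector_right_distrib matrix_vector_mult_scaleR
            inner_add_left inner_add_right power2_eq_square inner_commute)
      then show ?thesis using nn[of "w + t *\<^sub>R y"] by simp
    qed
    then show ?thesis by (rule quad_discr)
  qed
  have wb: "w \<bullet> (P *v w) \<le> K * (w \<bullet> w)" for w
  proof -
    have "w \<bullet> (P *v w) \<le> norm w * norm (P *v w)" by (rule norm_cauchy_schwarz)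
    also have "\<dots> \<le> norm w * (K * norm w)" by (intro mult_left_mono K(2)) auto
    finally show ?thesis by (simp add: dot_square_norm power2_eq_square mult_ac)
  qed
  show ?thesis
  proof (rule that[OF K(1)])
    fix y
    let ?w = "P *v y"
    have "(?w \<bullet> ?w)^2 \<le> (y \<bullet> (P *v y)) * (?w \<bullet> (P *v ?w))"
      using cs[of ?w y] by simp
    also have "\<dots> \<le> (y \<bullet> (P *v y)) * (K * (?w \<bullet> ?w))"
      using wb[of ?w] nn[of y] by (intro mult_left_mono) auto
    finally have h: "(?w \<bullet> ?w) * (?w \<bullet> ?w) \<le> (K * (y \<bullet> (P *v y))) * (?w \<bullet> ?w)"
      by (simp add: power2_eq_square mult_ac)
    show "?w \<bullet> ?w \<le> K * (y \<bullet> (P *v y))"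
    proof (cases "?w \<bullet> ?w = 0")
      case True then show ?thesis using K(1) nn[of y] by simp
    next
      case False
      then have "?w \<bullet> ?w > 0" by (simp add: inner_gt_zero_iff)
      then show ?thesis using h by simp
    qed
  qed
qed

lemma sym_quad_zero:
  fixes Q :: "real^'n^'n"
  assumes "transpose Q = Q" "\<And>x. x \<bullet> (Q *v x) = 0"
  shows "Q = 0"
proof -
  have "Q *v y = 0" for y
  proof -
    have "psd Q" using assms unfolding psd_def symmetric_mat_def by simp
    then show ?thesis using psd_zero assms(2) by blast
  qed
  then show ?thesis by (simp add: matrix_eq)
qed




lemma vec_eq_by_inner: "(\<And>v. v \<bullet> a = v \<bullet> (b::real^'n)) \<Longrightarrow> a = b"
proof -
  assume h: "\<And>v. v \<bullet> a = v \<bullet> b"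
  have "(a - b) \<bullet> (a - b) = 0" using h[of "a - b"] by (simp add: inner_diff_right)
  then show ?thesis by simp
qed

lemma neg_mult: "(- A) *v x = - (A *v (x::real^_))"
  by (simp add: vec_eq_iff matrix_vector_mult_def sum_negf)

lemma scale_mult: "(c *\<^sub>R A) *v x = c *\<^sub>R (A *v (x::real^_))"
  by (simp add: scaleR_matrix_vector_assoc)

lemma psd_sym: "psd P \<Longrightarrow> transpose P = P"
  by (simp add: psd_def symmetric_mat_def)

lemma pinv_props:
  fixes A :: "real^'n^'n"
  assumes "transpose A = A"
  shows "A *v (pinv A *v (A *v v)) = A *v v" "pinv A *v (A *v (pinv A *v v)) = pinv A *v v"
    "transpose (pinv A) = pinv A"
proof -
  have p: "penrose A (pinv A)" by (rule pinv_penrose_sym[OF assms])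
  then show "A *v (pinv A *v (A *v v)) = A *v v" "pinv A *v (A *v (pinv A *v v)) = pinv A *v v"
    unfolding penrose_def by (metis matrix_vector_mul_assoc)+
  show "transpose (pinv A) = pinv A" by (rule pinv_sym[OF assms])
qed

lemma ker_factor:
  fixes A :: "real^'n^'n" and C :: "real^'n^'m"
  assumes "transpose A = A" "\<And>v. A *v v = 0 \<Longrightarrow> C *v v = 0"
  shows "C *v v = C *v (pinv A *v (A *v v))"
proof -
  have "A *v (v - pinv A *v (A *v v)) = 0"
    using pinv_props(1)[OF assms(1)] by (simp add: matrix_vector_mult_diff_distrib)
  then have "C *v (v - pinv A *v (A *v v)) = 0" by (rule assms(2))
  then show ?thesis by (simp add: matrix_vector_mult_diff_distrib)
qed

lemma range_lemma:
  fixes P :: "real^('q::finite+'r::finite)^('q+'r)"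
  assumes sym: "symmetric_mat P" and ker: "mat_ker (blk22 P) \<subseteq> mat_ker (blk12 P)"
  shows "blk21 P *v x = blk22 P *v (pinv (blk22 P) *v (blk21 P *v x))"
proof (rule vec_eq_by_inner)
  fix v
  note bs = blk_sym[OF sym]
  let ?X = "pinv (blk22 P)"
  have pp: "transpose ?X = ?X" using pinv_props(3)[OF bs(3)] .
  have k: "blk12 P *v v = blk12 P *v (?X *v (blk22 P *v v))"
    by (rule ker_factor[OF bs(3)]) (use ker in \<open>auto simp: mat_ker_def\<close>)
  have "v \<bullet> (blk21 P *v x) = (blk12 P *v v) \<bullet> x"
    using dot_transpose[of "blk21 P" v x] bs(2) by simp
  also have "\<dots> = (blk12 P *v (?X *v (blk22 P *v v))) \<bullet> x" using k by simp
  also have "\<dots> = (?X *v (blk22 P *v v)) \<bullet> (blk21 P *v x)"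
    using dot_transpose[of "blk21 P" "?X *v (blk22 P *v v)" x] bs(2) by simp
  also have "\<dots> = (blk22 P *v v) \<bullet> (?X *v (blk21 P *v x))" using dot_sym[OF pp] by simp
  also have "\<dots> = v \<bullet> (blk22 P *v (?X *v (blk21 P *v x)))" using dot_sym[OF bs(3)] by simp
  finally show "v \<bullet> (blk21 P *v x) = v \<bullet> (blk22 P *v (?X *v (blk21 P *v x)))" .
qed

lemma cross_term:
  fixes M :: "real^('q::finite+'r::finite)^('q+'r)"
  assumes "symmetric_mat M"
  shows "x \<bullet> (blk12 M *v y) = y \<bullet> (blk21 M *v x)"
  using dot_transpose[of "blk12 M" x y] blk_sym(1)[OF assms] by (simp add: inner_commute)

lemma quad_block:
  fixes M :: "real^('q::finite+'r::finite)^('q+'r)"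
  assumes "symmetric_mat M"
  shows "join x y \<bullet> (M *v join x y) = x \<bullet> (blk11 M *v x) + 2 * (y \<bullet> (blk21 M *v x)) + y \<bullet> (blk22 M *v y)"
  using cross_term[OF assms, of x y]
  by (simp add: inner_split[of "join x y"] top_mult bot_mult inner_add_right)

lemma N_quad:
  fixes N :: "real^('q::finite+'r::finite)^('q+'r)"
  assumes symN: "symmetric_mat N" and kerN: "mat_ker (blk22 N) \<subseteq> mat_ker (blk12 N)"
    and sch: "schur N = 0"
  shows "join x (- (pinv (blk22 N) ** blk21 N) *v x + u) \<bullet> (N *v join x (- (pinv (blk22 N) ** blk21 N) *v x + u))
     = u \<bullet> (blk22 N *v u)"
proof -
  note bs = blk_sym[OF symN]
  let ?X = "pinv (blk22 N)"
  define a where "a = blk21 N *v x"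
  have XN: "blk22 N *v (?X *v a) = a" unfolding a_def using range_lemma[OF symN kerN] by simp
  have Xs: "transpose ?X = ?X" using pinv_props(3)[OF bs(3)] .
  have "blk11 N = blk12 N ** ?X ** blk21 N"
    using sch unfolding schur_def by (metis eq_iff_diff_eq_0)
  then have "blk11 N *v x = (blk12 N ** ?X ** blk21 N) *v x" by simp
  then have "blk11 N *v x = blk12 N *v (?X *v a)" unfolding a_def by (simp add: matrix_vector_mul_assoc matrix_mul_assoc)
  then have h11: "x \<bullet> (blk11 N *v x) = (?X *v a) \<bullet> a"
    using cross_term[OF symN, of x "?X *v a"] unfolding a_def by simp
  have z: "- (?X ** blk21 N) *v x = - (?X *v a)"
    unfolding a_def by (simp add: matrix_vector_mul_assoc neg_mult)
  have c1: "(?X *v a) \<bullet> (blk22 N *v u) = a \<bullet> u"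
    using dot_sym[OF bs(3), of "?X *v a" u] XN by simp
  have c2: "u \<bullet> (blk22 N *v (?X *v a)) = u \<bullet> a" using XN by simp
  show ?thesis
    unfolding quad_block[OF symN] z h11
    using c1 c2 XN
    by (simp add: a_def[symmetric] inner_diff_left inner_diff_right matrix_vector_mult_diff_distrib
        matrix_vector_right_distrib inner_add_left inner_add_right inner_commute algebra_simps)
qed




lemma M_expand:
  fixes M :: "real^('q::finite+'r::finite)^('q+'r)"
  assumes sym: "symmetric_mat M"
  shows "join x (z + u) \<bullet> (M *v join x (z + u)) =
    join x z \<bullet> (M *v join x z) + 2 * (u \<bullet> bot (M *v join x z)) + u \<bullet> (blk22 M *v u)"
proof -
  have MT: "transpose M = M" using sym by (simp add: symmetric_mat_def)
  let ?p = "join x z" and ?q = "join 0 u"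
  have j: "join x (z + u) = ?p + ?q" using join_add[of x 0 z u] by simp
  have a: "?p \<bullet> (M *v ?q) = ?q \<bullet> (M *v ?p)"
    using dot_sym[OF MT, of ?q ?p] by (simp add: inner_commute)
  have b: "?q \<bullet> (M *v ?p) = u \<bullet> bot (M *v ?p)"
    by (simp add: inner_split[of ?q])
  have c: "?q \<bullet> (M *v ?q) = u \<bullet> (blk22 M *v u)"
    by (simp add: inner_split[of ?q] bot_mult)
  show ?thesis unfolding j
    using a b c
    by (simp add: matrix_vector_right_distrib inner_add_left inner_add_right)
qed

lemma M_kill:
  fixes M :: "real^('q::finite+'r::finite)^('q+'r)"
  assumes "blk22 M *v y = 0" "blk12 M *v y = 0"
  shows "M *v join 0 y = 0"
proof -
  have "M *v join 0 y = join (top (M *v join 0 y)) (bot (M *v join 0 y))" by (rule join_eq_iff)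
  also have "\<dots> = join 0 0" using assms by (simp add: top_mult bot_mult)
  finally show ?thesis by simp
qed

lemma Theta_c:
  fixes M :: "real^('q::finite+'r::finite)^('q+'r)" and Z0 :: "real^'q^'r"
  assumes symM: "symmetric_mat M" and kerM: "mat_ker (blk22 M) \<subseteq> mat_ker (blk12 M)"
    and psdM: "psd (- blk22 M)"
    and hx: "schur M *v x = 0"
    and tx: "(transpose (stackI Z0) ** M ** stackI Z0) *v x = 0"
  shows "bot (M *v join x (Z0 *v x)) = 0"
proof -
  note bs = blk_sym[OF symM]
  let ?Y = "pinv (blk22 M)"
  define z where "z = Z0 *v x"
  define a where "a = blk21 M *v x"
  define w where "w = bot (M *v join x z)"
  have w: "w = a + blk22 M *v z" unfolding w_def a_def by (simp add: bot_mult)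
  have Ys: "transpose ?Y = ?Y" using pinv_props(3)[OF bs(3)] .
  have YA: "blk22 M *v (?Y *v a) = a" unfolding a_def using range_lemma[OF symM kerM] by simp
  have th: "x \<bullet> ((transpose (stackI Z0) ** M ** stackI Z0) *v x) =
      x \<bullet> (blk11 M *v x) + 2 * (z \<bullet> a) + z \<bullet> (blk22 M *v z)"
    unfolding quad_congr stackI_mult quad_block[OF symM] z_def a_def by simp
  have "blk12 M ** ?Y ** blk21 M *v x = blk12 M *v (?Y *v a)"
    unfolding a_def by (simp add: matrix_vector_mul_assoc matrix_mul_assoc)
  then have sc: "x \<bullet> (schur M *v x) = x \<bullet> (blk11 M *v x) - (?Y *v a) \<bullet> a"
    unfolding schur_def using cross_term[OF symM, of x "?Y *v a"] a_def
    by (simp add: matrix_vector_mult_diff_rdistrib inner_diff_right)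
  have e1: "a \<bullet> (?Y *v (blk22 M *v z)) = a \<bullet> z"
    using dot_sym[OF Ys, of a "blk22 M *v z"] dot_sym[OF bs(3), of "?Y *v a" z] YA by simp
  have e2: "(blk22 M *v z) \<bullet> (?Y *v a) = a \<bullet> z"
    using dot_sym[OF bs(3), of z "?Y *v a"] YA by (simp add: inner_commute)
  have e3: "(blk22 M *v z) \<bullet> (?Y *v (blk22 M *v z)) = z \<bullet> (blk22 M *v z)"
    using dot_sym[OF bs(3), of z "?Y *v (blk22 M *v z)"] pinv_props(1)[OF bs(3), of z] by simp
  have wy: "w \<bullet> (?Y *v w) = a \<bullet> (?Y *v a) + 2 * (a \<bullet> z) + z \<bullet> (blk22 M *v z)"
    unfolding w using e1 e2 e3
    by (simp add: matrix_vector_right_distrib inner_add_left inner_add_right)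
  have "a \<bullet> (?Y *v a) = (?Y *v a) \<bullet> a" by (simp add: inner_commute)
  then have "w \<bullet> (?Y *v w) = 0"
    using th sc wy hx tx by (simp add: inner_commute)
  moreover have "(?Y *v w) \<bullet> (blk22 M *v (?Y *v w)) = w \<bullet> (?Y *v w)"
    using dot_sym[OF Ys, of w "blk22 M *v (?Y *v w)"] pinv_props(2)[OF bs(3), of w] by simp
  ultimately have "(?Y *v w) \<bullet> ((- blk22 M) *v (?Y *v w)) = 0" by (simp add: neg_mult)
  then have "(- blk22 M) *v (?Y *v w) = 0" by (rule psd_zero[OF psdM])
  then have m0: "blk22 M *v (?Y *v w) = 0" by (simp add: neg_mult)
  have "blk22 M *v (?Y *v w) = w"
    unfolding w using YA pinv_props(1)[OF bs(3), of z]
    by (simp add: matrix_vector_right_distrib)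
  then show ?thesis using m0 w_def z_def by simp
qed




lemma fin_ineq:
  fixes A Bn Kc Ku B5 t p cu m :: real
  assumes "A \<ge> 0" "Bn \<ge> 0" "A^2 \<le> Kc * t" "Kc > 0" "Bn^2 \<le> Ku * p" "cu \<ge> -(A*Bn)"
    "m \<ge> -(B5 * Bn^2)" "B5 \<ge> 0" "t \<ge> 0"
  shows "t + 2*cu + m + ((Kc + B5)*Ku) * p \<ge> 0"
proof -
  have "(Kc + B5) * Bn^2 \<le> (Kc + B5) * (Ku * p)"
    using assms by (intro mult_left_mono) auto
  then have h1: "(Kc + B5) * Bn^2 \<le> ((Kc + B5)*Ku) * p" by (simp add: mult_ac)
  have "0 \<le> (A - Kc * Bn)^2" by simp
  also have "\<dots> = A^2 - 2 * Kc * (A * Bn) + Kc * (Kc * Bn^2)" by (simp add: power2_eq_square algebra_simps)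
  also have "\<dots> \<le> Kc * t - 2 * Kc * (A * Bn) + Kc * (Kc * Bn^2)" using assms(3) by simp
  also have "\<dots> = Kc * (t - 2 * (A * Bn) + Kc * Bn^2)" by (simp add: algebra_simps)
  finally have "0 \<le> t - 2 * (A * Bn) + Kc * Bn^2"
    using assms(4) by (simp add: zero_le_mult_iff)
  then show ?thesis using h1 assms(6,7) by (simp add: algebra_simps)
qed

lemma transpose_diff: "transpose (A - B) = transpose A - transpose (B::real^'n^'m)"
  by (simp add: transpose_def vec_eq_iff)

lemma part1:
  fixes M N :: "real^('q::finite + 'r::finite)^('q + 'r)"
  assumes symM: "symmetric_mat M" and ps: "psd (M - \<alpha> *\<^sub>R N)"
  shows "Zset0 N \<subseteq> Zset M"
proof
  fix Z assume "Z \<in> Zset0 N"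
  then have Z0: "transpose (stackI Z) ** N ** stackI Z = 0" by (simp add: Zset0_def)
  show "Z \<in> Zset M" unfolding Zset_def psd_def
  proof (intro CollectI conjI allI)
    show "symmetric_mat (transpose (stackI Z) ** M ** stackI Z)" by (rule congr_sym[OF symM])
    fix x
    let ?w = "stackI Z *v x"
    have "?w \<bullet> (N *v ?w) = 0" using quad_congr[of x "stackI Z" N] Z0 by simp
    moreover have "?w \<bullet> ((M - \<alpha> *\<^sub>R N) *v ?w) \<ge> 0" using ps unfolding psd_def by blast
    ultimately have "?w \<bullet> (M *v ?w) \<ge> 0"
      by (simp add: matrix_vector_mult_diff_rdistrib scale_mult inner_diff_right)
    then show "0 \<le> x \<bullet> ((transpose (stackI Z) ** M ** stackI Z) *v x)" by (simp add: quad_congr)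
  qed
qed




lemma part2:
  fixes M N :: "real^('q::finite + 'r::finite)^('q + 'r)"
  assumes symM: "symmetric_mat M" and symN: "symmetric_mat N"
    and PM: "M \<in> PiSet" and PN: "N \<in> PiSet" and schN: "schur N = 0"
    and kerT: "mat_ker (transpose (stackI (- (pinv (blk22 N) ** blk21 N))) ** M
                 ** stackI (- (pinv (blk22 N) ** blk21 N))) \<subseteq> mat_ker (schur M)"
    and H: "Zset0 N \<subseteq> Zset M"
  shows "\<exists>\<alpha>::real. \<alpha> \<ge> 0 \<and> psd (M - \<alpha> *\<^sub>R N)"
proof -
  have psdM: "psd (- blk22 M)" and kerM: "mat_ker (blk22 M) \<subseteq> mat_ker (blk12 M)"
    using PM by (auto simp: PiSet_def)
  have psdN: "psd (- blk22 N)" and kerN: "mat_ker (blk22 N) \<subseteq> mat_ker (blk12 N)"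
    using PN by (auto simp: PiSet_def)
  note bsM = blk_sym[OF symM] and bsN = blk_sym[OF symN]
  have MT: "transpose M = M" and NT: "transpose N = N" using symM symN by (auto simp: symmetric_mat_def)
  define Z0 where "Z0 = - (pinv (blk22 N) ** blk21 N)"
  define \<Theta> where "\<Theta> = transpose (stackI Z0) ** M ** stackI Z0"
  define X where "X = pinv (blk22 N)"
  define C where "C = blk21 M + blk22 M ** Z0"
  have cC: "bot (M *v join x (Z0 *v x)) = C *v x" for x
    unfolding C_def by (simp add: bot_mult matrix_vector_mult_add_rdistrib matrix_vector_mul_assoc)
  have NQ: "join x (Z0 *v x + u) \<bullet> (N *v join x (Z0 *v x + u)) = u \<bullet> (blk22 N *v u)" for x u
    unfolding Z0_def by (rule N_quad[OF symN kerN schN])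
  have MQ: "join x (Z0 *v x + u) \<bullet> (M *v join x (Z0 *v x + u)) =
      x \<bullet> (\<Theta> *v x) + 2 * (u \<bullet> (C *v x)) + u \<bullet> (blk22 M *v u)" for x u
    unfolding M_expand[OF symM] cC \<Theta>_def quad_congr stackI_mult by simp
  have Zmem: "Z0 + W \<in> Zset0 N" if W: "\<And>x. blk22 N *v (W *v x) = 0" for W
    unfolding Zset0_def
  proof (intro CollectI sym_quad_zero)
    show "transpose (transpose (stackI (Z0 + W)) ** N ** stackI (Z0 + W)) =
        transpose (stackI (Z0 + W)) ** N ** stackI (Z0 + W)"
      using congr_sym[OF symN] by (simp add: symmetric_mat_def)
    fix x
    show "x \<bullet> ((transpose (stackI (Z0 + W)) ** N ** stackI (Z0 + W)) *v x) = 0"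
      unfolding quad_congr stackI_mult using NQ[of x "W *v x"] W[of x]
      by (simp add: matrix_vector_mult_add_rdistrib)
  qed
  have psdT: "psd \<Theta>"
  proof -
    have "Z0 + 0 \<in> Zset0 N" by (rule Zmem) simp
    then have "Z0 \<in> Zset M" using H by auto
    then show ?thesis by (simp add: Zset_def \<Theta>_def)
  qed
  have TT: "transpose \<Theta> = \<Theta>" using psd_sym[OF psdT] .
  have kill: "blk22 M *v y = 0 \<and> blk12 M *v y = 0" if y: "blk22 N *v y = 0" for y
  proof -
    define i0 where "i0 = (undefined :: 'q)"
    define x0 :: "real^'q" where "x0 = axis i0 1"
    define W :: "real \<Rightarrow> real^'q^'r" where "W \<tau> = (\<chi> j k. if k = i0 then \<tau> * y$j else 0)" for \<tau>
    have Wv: "W \<tau> *v x = (\<tau> * x$i0) *\<^sub>R y" for \<tau> x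
      unfolding W_def by (simp add: vec_eq_iff matrix_vector_mult_def if_distrib if_distribR
          sum.delta mult_ac cong: if_cong)
    have q: "(y \<bullet> (blk22 M *v y)) * \<tau>^2 + (2 * (y \<bullet> (C *v x0))) * \<tau> + x0 \<bullet> (\<Theta> *v x0) \<ge> 0" for \<tau>
    proof -
      have "Z0 + W \<tau> \<in> Zset0 N"
        by (rule Zmem) (simp add: Wv matrix_vector_mult_scaleR y)
      then have "Z0 + W \<tau> \<in> Zset M" using H by auto
      then have "x0 \<bullet> ((transpose (stackI (Z0 + W \<tau>)) ** M ** stackI (Z0 + W \<tau>)) *v x0) \<ge> 0"
        by (simp add: Zset_def psd_def)
      then have "join x0 (Z0 *v x0 + \<tau> *\<^sub>R y) \<bullet> (M *v join x0 (Z0 *v x0 + \<tau> *\<^sub>R y)) \<ge> 0"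
        unfolding quad_congr stackI_mult by (simp add: matrix_vector_mult_add_rdistrib Wv x0_def)
      then show ?thesis unfolding MQ
        by (simp add: matrix_vector_mult_scaleR power2_eq_square algebra_simps)
    qed
    have "y \<bullet> (blk22 M *v y) \<ge> 0" using quad_a_nonneg q by blast
    moreover have "y \<bullet> ((- blk22 M) *v y) \<ge> 0" using psdM by (simp add: psd_def)
    ultimately have "y \<bullet> ((- blk22 M) *v y) = 0" by (simp add: neg_mult)
    then have "(- blk22 M) *v y = 0" by (rule psd_zero[OF psdM])
    then have m22: "blk22 M *v y = 0" by (simp add: neg_mult)
    then have "blk12 M *v y = 0" using kerM by (auto simp: mat_ker_def)
    then show ?thesis using m22 by simp
  qed
  have cz: "C *v x = 0" if "\<Theta> *v x = 0" for x
  proof -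
    have "schur M *v x = 0" using kerT that unfolding \<Theta>_def Z0_def by (auto simp: mat_ker_def)
    then have "bot (M *v join x (Z0 *v x)) = 0"
      using Theta_c[OF symM kerM psdM _ that[unfolded \<Theta>_def]] by simp
    then show ?thesis using cC by simp
  qed
  obtain K1 where K1: "K1 > 0" "\<And>y. (\<Theta> *v y) \<bullet> (\<Theta> *v y) \<le> K1 * (y \<bullet> (\<Theta> *v y))"
    using psd_bound[OF psdT] by blast
  obtain B1 where B1: "B1 > 0" "\<And>v. norm ((C ** pinv \<Theta>) *v v) \<le> B1 * norm v"
    using linear_bounded_pos[OF matrix_vector_mul_linear[of "C ** pinv \<Theta>"]] by blast
  define Kc where "Kc = B1^2 * K1 + 1"
  have Kc: "Kc > 0" unfolding Kc_def using K1 by (simp add: add_nonneg_pos)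
  have cbound: "norm (C *v x) ^ 2 \<le> Kc * (x \<bullet> (\<Theta> *v x))" for x
  proof -
    have t0: "x \<bullet> (\<Theta> *v x) \<ge> 0" using psdT by (simp add: psd_def)
    have "C *v x = C *v (pinv \<Theta> *v (\<Theta> *v x))"
      by (rule ker_factor[OF TT]) (rule cz)
    then have "norm (C *v x) \<le> B1 * norm (\<Theta> *v x)"
      using B1(2)[of "\<Theta> *v x"] by (simp add: matrix_vector_mul_assoc matrix_mul_assoc)
    then have "norm (C *v x) ^ 2 \<le> (B1 * norm (\<Theta> *v x))^2"
      by (intro power_mono) auto
    also have "\<dots> = B1^2 * ((\<Theta> *v x) \<bullet> (\<Theta> *v x))"
      by (simp add: power_mult_distrib dot_square_norm)
    also have "\<dots> \<le> B1^2 * (K1 * (x \<bullet> (\<Theta> *v x)))"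
      using K1(2)[of x] by (intro mult_left_mono) auto
    also have "\<dots> \<le> Kc * (x \<bullet> (\<Theta> *v x))"
      unfolding Kc_def using t0 by (simp add: algebra_simps)
    finally show ?thesis .
  qed
  obtain K3 where K3: "K3 > 0" "\<And>y. ((- blk22 N) *v y) \<bullet> ((- blk22 N) *v y) \<le> K3 * (y \<bullet> ((- blk22 N) *v y))"
    using psd_bound[OF psdN] by blast
  obtain B4 where B4: "B4 > 0" "\<And>v. norm (X *v v) \<le> B4 * norm v"
    using linear_bounded_pos[OF matrix_vector_mul_linear[of X]] by blast
  obtain B5 where B5: "B5 > 0" "\<And>v. norm (blk22 M *v v) \<le> B5 * norm v"
    using linear_bounded_pos[OF matrix_vector_mul_linear[of "blk22 M"]] by blast
  define Ku where "Ku = B4^2 * K3"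
  have ubound: "norm u2 ^ 2 \<le> Ku * (u2 \<bullet> ((- blk22 N) *v u2))" if u2: "u2 = X *v (blk22 N *v u)" for u u2
  proof -
    have "X *v (blk22 N *v u2) = u2" unfolding u2 X_def by (rule pinv_props(2)[OF bsN(3)])
    then have "norm u2 \<le> B4 * norm (blk22 N *v u2)" using B4(2)[of "blk22 N *v u2"] by simp
    then have "norm u2 ^ 2 \<le> (B4 * norm (blk22 N *v u2))^2" by (intro power_mono) auto
    also have "\<dots> = B4^2 * (((- blk22 N) *v u2) \<bullet> ((- blk22 N) *v u2))"
      by (simp add: power_mult_distrib dot_square_norm neg_mult)
    also have "\<dots> \<le> B4^2 * (K3 * (u2 \<bullet> ((- blk22 N) *v u2)))"
      using K3(2)[of u2] by (intro mult_left_mono) auto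
    finally show ?thesis unfolding Ku_def by (simp add: mult_ac)
  qed
  define \<alpha> where "\<alpha> = (Kc + B5) * Ku"
  have a0: "\<alpha> \<ge> 0" unfolding \<alpha>_def Ku_def using Kc B5 K3 by simp
  have "psd (M - \<alpha> *\<^sub>R N)"
    unfolding psd_def symmetric_mat_def
  proof (intro conjI allI)
    show "transpose (M - \<alpha> *\<^sub>R N) = M - \<alpha> *\<^sub>R N" using MT NT by (simp add: transpose_diff transpose_scalar)
    fix v :: "real^('q+'r)"
    define x where "x = top v"
    define u where "u = bot v - Z0 *v x"
    define u2 where "u2 = X *v (blk22 N *v u)"
    define u1 where "u1 = u - u2"
    have v: "v = join x (Z0 *v x + u)" unfolding x_def u_def using join_eq_iff[of v] by simp
    have n1: "blk22 N *v u1 = 0" unfolding u1_def u2_def X_def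
      using pinv_props(1)[OF bsN(3), of u] by (simp add: matrix_vector_mult_diff_distrib)
    have k1: "blk22 M *v u1 = 0" "blk12 M *v u1 = 0" using kill[OF n1] by auto
    have vN: "v \<bullet> (N *v v) = u2 \<bullet> (blk22 N *v u2)"
    proof -
      have "u = u1 + u2" unfolding u1_def by simp
      moreover have "u2 \<bullet> (blk22 N *v u1) = u1 \<bullet> (blk22 N *v u2)"
        using dot_sym[OF bsN(3), of u1 u2] by (simp add: inner_commute)
      ultimately have "u \<bullet> (blk22 N *v u) = u2 \<bullet> (blk22 N *v u2)"
        using n1 by (simp add: matrix_vector_right_distrib inner_add_left inner_add_right)
      then show ?thesis using NQ[of x u] v by simp
    qed
    have vM: "v \<bullet> (M *v v) = x \<bullet> (\<Theta> *v x) + 2 * (u2 \<bullet> (C *v x)) + u2 \<bullet> (blk22 M *v u2)"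
    proof -
      have "Z0 *v x + u = (Z0 *v x + u2) + u1" unfolding u1_def by simp
      then have "v \<bullet> (M *v v) = join x (Z0 *v x + u2) \<bullet> (M *v join x (Z0 *v x + u2))
           + 2 * (u1 \<bullet> bot (M *v join x (Z0 *v x + u2))) + u1 \<bullet> (blk22 M *v u1)"
        using v M_expand[OF symM, of x "Z0 *v x + u2" u1] by (simp add: add.assoc)
      moreover have "u1 \<bullet> bot (M *v join x (Z0 *v x + u2)) = 0"
      proof -
        have "u1 \<bullet> (blk21 M *v x) = x \<bullet> (blk12 M *v u1)" using cross_term[OF symM, of x u1] by simp
        moreover have "u1 \<bullet> (blk22 M *v w) = (blk22 M *v u1) \<bullet> w" for w
          using dot_sym[OF bsM(3), of u1 w] by simp
        ultimately show ?thesis using k1 by (simp add: bot_mult inner_add_right)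
      qed
      ultimately show ?thesis using MQ[of x u2] k1 by simp
    qed
    define t where "t = x \<bullet> (\<Theta> *v x)"
    define p where "p = u2 \<bullet> ((- blk22 N) *v u2)"
    have t0: "t \<ge> 0" unfolding t_def using psdT by (simp add: psd_def)
    have cu: "u2 \<bullet> (C *v x) \<ge> - (norm (C *v x) * norm u2)"
      using Cauchy_Schwarz_ineq2[of u2 "C *v x"] by (simp add: mult.commute abs_le_iff)
    have mm: "u2 \<bullet> (blk22 M *v u2) \<ge> - (B5 * (norm u2)^2)"
    proof -
      have "\<bar>u2 \<bullet> (blk22 M *v u2)\<bar> \<le> norm u2 * norm (blk22 M *v u2)" by (rule Cauchy_Schwarz_ineq2)
      also have "\<dots> \<le> norm u2 * (B5 * norm u2)" by (intro mult_left_mono B5(2)) auto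
      finally show ?thesis by (simp add: power2_eq_square mult_ac abs_le_iff)
    qed
    have "t + 2 * (u2 \<bullet> (C *v x)) + u2 \<bullet> (blk22 M *v u2) + ((Kc + B5) * Ku) * p \<ge> 0"
      by (rule fin_ineq[OF norm_ge_zero norm_ge_zero cbound[of x, folded t_def] Kc
            ubound[OF u2_def, folded p_def] cu mm less_imp_le[OF B5(1)] t0])
    moreover have "v \<bullet> ((M - \<alpha> *\<^sub>R N) *v v) = v \<bullet> (M *v v) - \<alpha> * (v \<bullet> (N *v v))"
      by (simp add: matrix_vector_mult_diff_rdistrib scale_mult inner_diff_right)
    moreover have "v \<bullet> (N *v v) = - p" unfolding p_def vN by (simp add: neg_mult)
    ultimately show "0 \<le> v \<bullet> ((M - \<alpha> *\<^sub>R N) *v v)"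
      unfolding vM \<alpha>_def t_def by simp
  qed
  then show ?thesis using a0 by blast
qed


theorem mainTheorem9:
  fixes M N :: "real^('q::finite + 'r::finite)^('q + 'r)"
  assumes "symmetric_mat M" and "symmetric_mat N"
  shows "((\<exists>\<alpha>::real. psd (M - \<alpha> *\<^sub>R N)) \<longrightarrow> Zset0 N \<subseteq> Zset M)
    \<and> (let \<Theta> = transpose (stackI (- (pinv (blk22 N) ** blk21 N))) ** M
                 ** stackI (- (pinv (blk22 N) ** blk21 N))
       in (M \<in> PiSet \<and> N \<in> PiSet \<and> schur N = 0 \<and> mat_ker \<Theta> \<subseteq> mat_ker (schur M))
          \<longrightarrow> (Zset0 N \<subseteq> Zset M \<longleftrightarrow> (\<exists>\<alpha>::real. \<alpha> \<ge> 0 \<and> psd (M - \<alpha> *\<^sub>R N))))"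
    unfolding Let_def using part1[OF assms(1)] part2[OF assms] by blast

end
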